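(* Assume Conditions 1–3 of the context hold and run the projected delayed-gradient method of the context with step sizes $\eta_t=\frac{3}{\alpha t}$ for $t\in\{\tau,\dots,T-1+\tau\}$. Then for every $x_\star\in\mathcal{W}$, $$\sum_{t=k}^{T-1}\big(f_{t;k}(x_t)-f_{t;k}(x_\star)\big)\le-\frac{\alpha}{6}\sum_{t=0}^{T-1}\|x_t-x_\star\|^2+\frac{\alpha G^2(3k+5\tau+3)}{6}+\frac{3L_g^2(1+\tau)}{\alpha}\log T+\sum_{t=k}^{T-1}\Big(\frac{3}{2\alpha}\|\varepsilon_t\|^2-\varepsilon_t^{s\top}(x_t-x_\star)\Big),$$ where $\varepsilon_t^s=\nabla f_t(x_t)-\nabla f_{t;k}(x_t)$.
   Context: Let $\mathcal{W}\subseteq\mathbb{R}^d$ be convex and let $T,\tau,k,h$ be integers with $\tau\ge1$, $h\ge1$, $\tau<k<T$. On a probability space with filtration $\{\mathcal{F}_t\}_{t\ge0}$, let $F_t:\mathcal{W}^{h+1}\to\mathbb{R}$, $t\in\{0,\dots,T-1\}$, be (random) functions and $f_t(x)=F_t(x,\dots,x)$; let $f_{t;k}(x)=\mathbb{E}[f_t(x)\mid\mathcal{F}_{t-k}]$. Condition 1: each $f_t$ is $L_f$-Lipschitz on $\mathcal{W}$ with $\max_{x\in\mathcal{W}}\|\nabla^2f_t(x)\|\le\beta$, and $f_{t;k}$ is $\alpha$-strongly convex ($\nabla^2f_{t;k}(x)\succeq\alpha I_d$ on $\mathcal{W}$) for all $t\in\{k,\dots,T-1\}$. Condition 2: each $F_t$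 is $L_c$-coordinatewise-Lipschitz, i.e. changing the $j$-th argument from $x_j$ to $\tilde x_j$ changes $F_t$ by at most $L_c\|x_j-\tilde x_j\|$, for every $j\in\{0,\dots,h\}$. Condition 3: $\sup_{x,y\in\mathcal{W}}\|x-y\|\le G$, and $\|g_t\|\le L_g$ for all $t\in\{0,\dots,T-1\}$. Method (OCO with memory and delayed feedback): initialize $x_0=\cdots=x_\tau\in\mathcal{W}$; for $t=\tau,\dots,T-1+\tau$, obtain $g_{t-\tau}=\nabla f_{t-\tau}(x_{t-\tau})+\varepsilon_{t-\tau}$ where $\varepsilon_{t-\tau}\in\mathbb{R}^d$ is an (arbitrary) gradient error, and set $x_{t+1}=\Pi_{\mathcal{W}}(x_t-\eta_tg_{t-\tau})$, with $\Pi_{\mathcal{W}}$ the Euclidean projection onto $\mathcal{W}$. *)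

theory Defs
  imports "HOL-Analysis.Analysis" "HOL-Probability.Probability"
begin

definition coord_lipschitz :: "'v::real_normed_vector set \<Rightarrow> nat \<Rightarrow> real \<Rightarrow> ((nat \<Rightarrow> 'v) \<Rightarrow> real) \<Rightarrow> bool" where
  "coord_lipschitz W h L F \<longleftrightarrow>
     (\<forall>xs j y. (\<forall>i\<le>h. xs i \<in> W) \<longrightarrow> j \<le> h \<longrightarrow> y \<in> W \<longrightarrow>
        \<bar>F (xs(j := y)) - F xs\<bar> \<le> L * norm (xs j - y))"

end

theory Submission
  imports Defs
begin


lemma strong_conv:
  fixes f :: "'v::euclidean_space \<Rightarrow> real" and W :: "'v set"
  assumes cW: "convex W" and aW: "a \<in> W" and bW: "b \<in> W"
    and gr: "\<And>y. y \<in> W \<Longrightarrow> GDERIV f y :> gf y"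
    and hs: "\<And>y. y \<in> W \<Longrightarrow> (gf has_derivative hf y) (at y)"
    and sc: "\<And>y v. y \<in> W \<Longrightarrow> \<alpha> * (norm v)\<^sup>2 \<le> v \<bullet> hf y v"
  shows "f a + gf a \<bullet> (b - a) + \<alpha> / 2 * (norm (b - a))\<^sup>2 \<le> f b"
proof -
  define v where "v = b - a"
  define p where "p s = a + s *\<^sub>R v" for s :: real
  have pW: "p s \<in> W" if "0 \<le> s" "s \<le> 1" for s
  proof -
    have "p s = (1 - s) *\<^sub>R a + s *\<^sub>R b" by (simp add: p_def v_def algebra_simps)
    then show ?thesis using convexD[OF cW aW bW, of "1 - s" s] that by simp
  qed
  have dp: "(p has_derivative (\<lambda>h. h *\<^sub>R v)) (at s)" for s
    unfolding p_def by (auto intro!: derivative_eq_intros)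
  have d1: "((\<lambda>s. f (p s)) has_real_derivative (gf (p s) \<bullet> v)) (at s)" if "0 \<le> s" "s \<le> 1" for s
  proof -
    have "(f has_derivative (\<lambda>h. h \<bullet> gf (p s))) (at (p s))"
      using gr[OF pW[OF that]] by (simp add: gderiv_def)
    from has_derivative_compose[OF dp this]
    show ?thesis unfolding has_field_derivative_def
      by (rule has_derivative_eq_rhs) (auto simp: inner_commute mult.commute)
  qed
  have d2: "((\<lambda>s. gf (p s) \<bullet> v) has_real_derivative (hf (p s) v \<bullet> v)) (at s)" if "0 \<le> s" "s \<le> 1" for s
  proof -
    have h: "((\<lambda>s. gf (p s)) has_derivative (\<lambda>h. hf (p s) (h *\<^sub>R v))) (at s)"
      using has_derivative_compose[OF dp hs[OF pW[OF that]]] by simp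
    have bl: "bounded_linear (hf (p s))" using hs[OF pW[OF that]] has_derivative_bounded_linear by blast
    have "((\<lambda>s. gf (p s) \<bullet> v) has_derivative (\<lambda>h. hf (p s) (h *\<^sub>R v) \<bullet> v)) (at s)"
      using has_derivative_inner_left[OF h] by simp
    then show ?thesis unfolding has_field_derivative_def
      by (rule has_derivative_eq_rhs) (auto simp: linear_simps(5)[OF bl] mult.commute)
  qed
  have m1: "gf (p 0) \<bullet> v - \<alpha> * (norm v)\<^sup>2 * 0 \<le> gf (p s) \<bullet> v - \<alpha> * (norm v)\<^sup>2 * s"
    if "0 \<le> s" "s \<le> 1" for s
  proof (rule DERIV_nonneg_imp_nondecreasing[OF that(1), where f="\<lambda>s. gf (p s) \<bullet> v - \<alpha> * (norm v)\<^sup>2 * s"])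
    fix u assume u: "0 \<le> u" "u \<le> s"
    show "\<exists>y. ((\<lambda>s. gf (p s) \<bullet> v - \<alpha> * (norm v)\<^sup>2 * s) has_real_derivative y) (at u) \<and> 0 \<le> y"
    proof (intro exI conjI)
      have "u \<le> 1" using u that by simp
      then show "((\<lambda>s. gf (p s) \<bullet> v - \<alpha> * (norm v)\<^sup>2 * s) has_real_derivative
          (hf (p u) v \<bullet> v - \<alpha> * (norm v)\<^sup>2 * 1)) (at u)"
        using u by (intro derivative_intros d2) auto
      show "0 \<le> hf (p u) v \<bullet> v - \<alpha> * (norm v)\<^sup>2 * 1"
        using sc[OF pW, of u v] u \<open>u \<le> 1\<close> by (simp add: inner_commute)
    qed
  qed
  have "f (p 0) - (gf a \<bullet> v) * 0 - \<alpha> / 2 * (norm v)\<^sup>2 * 0\<^sup>2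
      \<le> f (p 1) - (gf a \<bullet> v) * 1 - \<alpha> / 2 * (norm v)\<^sup>2 * 1\<^sup>2"
  proof (rule DERIV_nonneg_imp_nondecreasing[where f="\<lambda>s. f (p s) - (gf a \<bullet> v) * s - \<alpha> / 2 * (norm v)\<^sup>2 * s\<^sup>2"])
    fix u :: real assume u: "0 \<le> u" "u \<le> 1"
    show "\<exists>y. ((\<lambda>s. f (p s) - (gf a \<bullet> v) * s - \<alpha> / 2 * (norm v)\<^sup>2 * s\<^sup>2) has_real_derivative y) (at u) \<and> 0 \<le> y"
    proof (intro exI conjI)
      show "((\<lambda>s. f (p s) - (gf a \<bullet> v) * s - \<alpha> / 2 * (norm v)\<^sup>2 * s\<^sup>2) has_real_derivative
          (gf (p u) \<bullet> v - (gf a \<bullet> v) * 1 - \<alpha> / 2 * (norm v)\<^sup>2 * (2 * u))) (at u)"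
        using u by (auto intro!: derivative_eq_intros d1)
      show "0 \<le> gf (p u) \<bullet> v - (gf a \<bullet> v) * 1 - \<alpha> / 2 * (norm v)\<^sup>2 * (2 * u)"
        using m1[OF u] by (simp add: p_def)
    qed
  qed simp
  then show ?thesis by (simp add: p_def v_def)
qed



lemma proj_step:
  fixes W :: "'v::euclidean_space set"
  assumes "convex W" "closed W" "W \<noteq> {}" "z \<in> W"
  shows "(norm (closest_point W (a - \<eta> *\<^sub>R g) - z))\<^sup>2
     \<le> (norm (a - z))\<^sup>2 - 2 * \<eta> * (g \<bullet> (a - z)) + \<eta>\<^sup>2 * (norm g)\<^sup>2"
proof -
  have "norm (closest_point W (a - \<eta> *\<^sub>R g) - z) \<le> norm ((a - \<eta> *\<^sub>R g) - z)"
    using closest_point_lipschitz[OF assms(1-3), of "a - \<eta> *\<^sub>R g" z] closest_point_self[OF assms(4)]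
    by (simp add: dist_norm)
  then have "(norm (closest_point W (a - \<eta> *\<^sub>R g) - z))\<^sup>2 \<le> (norm ((a - z) - \<eta> *\<^sub>R g))\<^sup>2"
    by (simp add: power_mono algebra_simps)
  also have "\<dots> = (norm (a - z))\<^sup>2 - 2 * \<eta> * (g \<bullet> (a - z)) + \<eta>\<^sup>2 * (norm g)\<^sup>2"
  proof -
    define u where "u = a - z"
    have "(norm (u - \<eta> *\<^sub>R g))\<^sup>2 = u \<bullet> u - 2 * \<eta> * (g \<bullet> u) + \<eta>\<^sup>2 * (g \<bullet> g)"
      unfolding power2_norm_eq_inner
      by (simp add: inner_diff_left inner_diff_right inner_commute power2_eq_square algebra_simps)
    then show ?thesis unfolding u_def[symmetric] by (simp add: power2_norm_eq_inner)
  qed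
  finally show ?thesis .
qed

lemma proj_move:
  fixes W :: "'v::euclidean_space set"
  assumes "convex W" "closed W" "W \<noteq> {}" "a \<in> W"
  shows "norm (closest_point W (a - \<eta> *\<^sub>R g) - a) \<le> \<bar>\<eta>\<bar> * norm g"
  using closest_point_lipschitz[OF assms(1-3), of "a - \<eta> *\<^sub>R g" a] closest_point_self[OF assms(4)]
  by (simp add: dist_norm)

lemma harm_ln:
  assumes "2 \<le> k" "k \<le> T"
  shows "(\<Sum>s\<in>{k..<T}. 1 / real s) \<le> ln (real T - 1)"
  using assms(2)
proof (induction T rule: dec_induct)
  case base
  then show ?case using assms by simp
next
  case (step n)
  have n2: "real n \<ge> 2" using step assms by simp
  have "1 / real n \<le> ln (real n) - ln (real n - 1)"
  proof -
    have "ln ((real n - 1) / real n) \<le> (real n - 1) / real n - 1"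
      using n2 by (intro ln_le_minus_one) simp
    also have "\<dots> = - 1 / real n" using n2 by (simp add: field_simps)
    finally show ?thesis using n2 by (simp add: ln_div)
  qed
  then show ?case using step by simp
qed

lemma telesc:
  fixes E :: "nat \<Rightarrow> real"
  assumes "a \<le> n"
  shows "(\<Sum>t\<in>{a..<n}. (real t + c) * (E t - E (t+1)))
       = (\<Sum>t\<in>{a..<n}. E (t+1)) + (real a + c) * E a - (real n + c) * E n"
  using assms
proof (induction n rule: dec_induct)
  case base then show ?case by simp
next
  case (step n)
  then show ?case by (simp add: algebra_simps)
qed



theorem lemma12:
  fixes M :: "'a measure" and Fil :: "nat \<Rightarrow> 'a measure"
    and W :: "'v::euclidean_space set"
    and T \<tau> k h :: nat
    and F :: "nat \<Rightarrow> 'a \<Rightarrow> (nat \<Rightarrow> 'v) \<Rightarrow> real"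
    and gradf :: "nat \<Rightarrow> 'a \<Rightarrow> 'v \<Rightarrow> 'v" and hessf :: "nat \<Rightarrow> 'a \<Rightarrow> 'v \<Rightarrow> 'v \<Rightarrow> 'v"
    and fk :: "nat \<Rightarrow> 'a \<Rightarrow> 'v \<Rightarrow> real"
    and gradfk :: "nat \<Rightarrow> 'a \<Rightarrow> 'v \<Rightarrow> 'v" and hessfk :: "nat \<Rightarrow> 'a \<Rightarrow> 'v \<Rightarrow> 'v \<Rightarrow> 'v"
    and Lf \<beta> \<alpha> Lc G Lg :: real
    and \<eta> :: "nat \<Rightarrow> real"
    and x :: "'a \<Rightarrow> nat \<Rightarrow> 'v" and \<epsilon> g :: "'a \<Rightarrow> nat \<Rightarrow> 'v"
    and xstar :: 'v and \<omega> :: 'a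
  assumes prob: "prob_space M"
    and filt: "filtration (space M) Fil"
    and subalg: "\<And>t. subalgebra M (Fil t)"
    and W_convex: "convex W" and W_closed: "closed W" and W_ne: "W \<noteq> {}"
    and idx: "1 \<le> \<tau>" "1 \<le> h" "\<tau> < k" "k < T"
    \<comment> \<open>the F_t are random functions\<close>
    and F_meas: "\<And>t xs. t < T \<Longrightarrow> (\<lambda>w. F t w xs) \<in> borel_measurable M"
    and f_int: "\<And>t y. t < T \<Longrightarrow> y \<in> W \<Longrightarrow> integrable M (\<lambda>w. F t w (\<lambda>_. y))"
    \<comment> \<open>f_{t;k}(y) = E[f_t(y) | F_{t-k}]\<close>
    and fk_cond: "\<And>t y. k \<le> t \<Longrightarrow> t < T \<Longrightarrow> y \<in> W \<Longrightarrow>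
        AE w in M. fk t w y = real_cond_exp M (Fil (t - k)) (\<lambda>w'. F t w' (\<lambda>_. y)) w"
    \<comment> \<open>Condition 1\<close>
    and f_grad: "\<And>t w y. t < T \<Longrightarrow> w \<in> space M \<Longrightarrow> y \<in> W \<Longrightarrow>
        GDERIV (\<lambda>z. F t w (\<lambda>_. z)) y :> gradf t w y"
    and f_hess: "\<And>t w y. t < T \<Longrightarrow> w \<in> space M \<Longrightarrow> y \<in> W \<Longrightarrow>
        (gradf t w has_derivative hessf t w y) (at y)"
    and f_lip: "\<And>t w. t < T \<Longrightarrow> w \<in> space M \<Longrightarrow> lipschitz_on Lf W (\<lambda>z. F t w (\<lambda>_. z))"
    and f_hess_bd: "\<And>t w y. t < T \<Longrightarrow> w \<in> space M \<Longrightarrow> y \<in> W \<Longrightarrow> onorm (hessf t w y) \<le> \<beta>"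
    and fk_grad: "\<And>t w y. k \<le> t \<Longrightarrow> t < T \<Longrightarrow> w \<in> space M \<Longrightarrow> y \<in> W \<Longrightarrow>
        GDERIV (fk t w) y :> gradfk t w y"
    and fk_hess: "\<And>t w y. k \<le> t \<Longrightarrow> t < T \<Longrightarrow> w \<in> space M \<Longrightarrow> y \<in> W \<Longrightarrow>
        (gradfk t w has_derivative hessfk t w y) (at y)"
    and alpha_pos: "0 < \<alpha>"
    and fk_sc: "\<And>t w y v. k \<le> t \<Longrightarrow> t < T \<Longrightarrow> w \<in> space M \<Longrightarrow> y \<in> W \<Longrightarrow>
        \<alpha> * (norm v)\<^sup>2 \<le> v \<bullet> hessfk t w y v"
    \<comment> \<open>Condition 2\<close>
    and F_coord: "\<And>t w. t < T \<Longrightarrow> w \<in> space M \<Longrightarrow> coord_lipschitz W h Lc (F t w)"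
    \<comment> \<open>Condition 3\<close>
    and diam: "\<And>y z. y \<in> W \<Longrightarrow> z \<in> W \<Longrightarrow> norm (y - z) \<le> G"
    and g_bd: "\<And>w t. w \<in> space M \<Longrightarrow> t < T \<Longrightarrow> norm (g w t) \<le> Lg"
    \<comment> \<open>the method\<close>
    and step: "\<And>t. \<tau> \<le> t \<Longrightarrow> t \<le> T - 1 + \<tau> \<Longrightarrow> \<eta> t = 3 / (\<alpha> * real t)"
    and init_W: "\<And>w. w \<in> space M \<Longrightarrow> x w 0 \<in> W"
    and init: "\<And>w t. w \<in> space M \<Longrightarrow> t \<le> \<tau> \<Longrightarrow> x w t = x w 0"
    and g_def: "\<And>w t. w \<in> space M \<Longrightarrow> t < T \<Longrightarrow> g w t = gradf t w (x w t) + \<epsilon> w t"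
    and upd: "\<And>w t. w \<in> space M \<Longrightarrow> \<tau> \<le> t \<Longrightarrow> t \<le> T - 1 + \<tau> \<Longrightarrow>
        x w (t + 1) = closest_point W (x w t - \<eta> t *\<^sub>R g w (t - \<tau>))"
    and xstar: "xstar \<in> W"
    and omega: "\<omega> \<in> space M"
  shows "(\<Sum>t=k..T-1. fk t \<omega> (x \<omega> t) - fk t \<omega> xstar)
     \<le> - (\<alpha> / 6) * (\<Sum>t<T. (norm (x \<omega> t - xstar))\<^sup>2)
       + \<alpha> * G\<^sup>2 * (3 * real k + 5 * real \<tau> + 3) / 6
       + 3 * Lg\<^sup>2 * (1 + real \<tau>) / \<alpha> * ln (real T)
       + (\<Sum>t=k..T-1. 3 / (2 * \<alpha>) * (norm (\<epsilon> \<omega> t))\<^sup>2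
            - (gradf t \<omega> (x \<omega> t) - gradfk t \<omega> (x \<omega> t)) \<bullet> (x \<omega> t - xstar))"
  proof -
  have T1: "1 \<le> T" and k2: "2 \<le> k" using idx by auto
  define X where "X = x \<omega>"
  define D where "D t = (norm (X t - xstar))\<^sup>2" for t
  have Lg0: "0 \<le> Lg" using g_bd[OF omega, of 0] T1 norm_ge_zero[of "g \<omega> 0"] by linarith
  have XW: "X t \<in> W" if "t \<le> T + \<tau>" for t
    using that
  proof (induction t)
    case 0 then show ?case using init_W omega by (simp add: X_def)
  next
    case (Suc m)
    show ?case
    proof (cases "Suc m \<le> \<tau>")
      case True then show ?thesis using init[OF omega True] init_W[OF omega] by (simp add: X_def)
    next
      case False
      then have "\<tau> \<le> m" "m \<le> T - 1 + \<tau>" using Suc.prems T1 by auto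
      then show ?thesis using upd[OF omega] closest_point_in_set[OF W_closed W_ne] by (simp add: X_def)
    qed
  qed
  have D0: "0 \<le> D t" for t by (simp add: D_def)
  have DG: "D t \<le> G\<^sup>2" if "t \<le> T + \<tau>" for t
  proof -
    have "norm (X t - xstar) \<le> G" using diam[OF XW[OF that] xstar] .
    then show ?thesis unfolding D_def by (intro power_mono) auto
  qed
  have move: "norm (X (j+1) - X j) \<le> 3 / (\<alpha> * real j) * Lg" if j: "\<tau> \<le> j" "j \<le> T - 1 + \<tau>" for j
  proof -
    have jW: "X j \<in> W" using XW j by simp
    have ej: "\<eta> j = 3 / (\<alpha> * real j)" using step j by simp
    have ej0: "0 \<le> \<eta> j" using ej alpha_pos by simp
    have "norm (X (j+1) - X j) \<le> \<bar>\<eta> j\<bar> * norm (g \<omega> (j - \<tau>))"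
      using upd[OF omega j] proj_move[OF W_convex W_closed W_ne jW] by (simp add: X_def)
    also have "\<dots> \<le> \<eta> j * Lg"
      using ej0 g_bd[OF omega, of "j - \<tau>"] j T1 by (simp add: mult_left_mono)
    finally show ?thesis using ej by simp
  qed
  have drift: "norm (X (s+m) - X s) \<le> real m * (3 / (\<alpha> * real s) * Lg)"
    if s: "k \<le> s" "s < T" and m: "m \<le> \<tau>" for s m
    using m
  proof (induction m)
    case 0 then show ?case by simp
  next
    case (Suc m)
    have "norm (X (s + Suc m) - X s) \<le> norm (X (s+m+1) - X (s+m)) + norm (X (s+m) - X s)"
      using norm_triangle_ineq[of "X (s+m+1) - X (s+m)" "X (s+m) - X s"] by simp
    also have "norm (X (s+m+1) - X (s+m)) \<le> 3 / (\<alpha> * real (s+m)) * Lg"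
      using move[of "s+m"] s Suc.prems idx by simp
    also have "\<dots> \<le> 3 / (\<alpha> * real s) * Lg"
      using alpha_pos Lg0 s idx by (intro mult_right_mono divide_left_mono) auto
    also have "norm (X (s+m) - X s) \<le> real m * (3 / (\<alpha> * real s) * Lg)"
      using Suc by simp
    finally show ?case by (simp add: ring_distribs add_divide_distrib)
  qed
  have key: "fk s \<omega> (X s) - fk s \<omega> xstar \<le> \<alpha> / 6 * ((real s + real \<tau>) * (D (s+\<tau>) - D (s+\<tau>+1)))
      - \<alpha> / 3 * D s + (3 / (2 * \<alpha>) * (norm (\<epsilon> \<omega> s))\<^sup>2
      - (gradf s \<omega> (X s) - gradfk s \<omega> (X s)) \<bullet> (X s - xstar))
      + 3 * Lg\<^sup>2 * (1 + real \<tau>) / \<alpha> * (1 / real s)"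
    if s: "k \<le> s" "s < T" for s
  proof -
    define t where "t = s + \<tau>"
    define u where "u = X s - xstar"
    have sW: "X s \<in> W" using XW s by simp
    have tW: "X t \<in> W" using XW s t_def by simp
    have spos: "0 < real s" using s idx by simp
    have sc: "fk s \<omega> (X s) + gradfk s \<omega> (X s) \<bullet> (xstar - X s) + \<alpha> / 2 * (norm (xstar - X s))\<^sup>2
        \<le> fk s \<omega> xstar"
      by (rule strong_conv[OF W_convex sW xstar, where f="fk s \<omega>" and gf="gradfk s \<omega>" and hf="hessfk s \<omega>"])
        (use fk_grad fk_hess fk_sc s omega in auto)
    have n1: "(norm (xstar - X s))\<^sup>2 = D s" by (simp add: D_def norm_minus_commute)
    have l1: "gradfk s \<omega> (X s) \<bullet> (xstar - X s) = - (gradfk s \<omega> (X s) \<bullet> u)"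
      unfolding u_def by (metis inner_minus_right minus_diff_eq)
    have A: "fk s \<omega> (X s) - fk s \<omega> xstar \<le> gradfk s \<omega> (X s) \<bullet> u - \<alpha> / 2 * D s"
      using sc unfolding n1 l1 by linarith
    have gdec: "gradfk s \<omega> (X s) \<bullet> u = g \<omega> s \<bullet> u - \<epsilon> \<omega> s \<bullet> u
        - (gradf s \<omega> (X s) - gradfk s \<omega> (X s)) \<bullet> u"
      using g_def[OF omega s(2)] by (simp add: X_def inner_diff_left inner_add_left)
    have young: "- (\<epsilon> \<omega> s \<bullet> u) \<le> 3 / (2 * \<alpha>) * (norm (\<epsilon> \<omega> s))\<^sup>2 + \<alpha> / 6 * D s"
    proof -
      define e where "e = \<epsilon> \<omega> s"
      have "(norm (e + (\<alpha>/3) *\<^sub>R u))\<^sup>2 = e \<bullet> e + 2 * (\<alpha>/3) * (e \<bullet> u) + (\<alpha>/3)\<^sup>2 * (u \<bullet> u)"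
        unfolding power2_norm_eq_inner
        by (simp add: inner_add_left inner_add_right inner_commute power2_eq_square algebra_simps)
      then have "0 \<le> e \<bullet> e + 2 * (\<alpha>/3) * (e \<bullet> u) + (\<alpha>/3)\<^sup>2 * (u \<bullet> u)" by (metis zero_le_power2)
      then have "0 \<le> 3 / (2 * \<alpha>) * (e \<bullet> e + 2 * (\<alpha>/3) * (e \<bullet> u) + (\<alpha>/3)\<^sup>2 * (u \<bullet> u))"
        using alpha_pos by simp
      also have "\<dots> = 3 / (2 * \<alpha>) * (e \<bullet> e) + e \<bullet> u + \<alpha> / 6 * (u \<bullet> u)"
        using alpha_pos by (simp add: field_simps power2_eq_square)
      finally show ?thesis
        by (simp add: e_def D_def u_def power2_norm_eq_inner)
    qed
    have et: "\<eta> t = 3 / (\<alpha> * real t)" using step s t_def by simp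
    have tpos: "0 < real t" using t_def idx by simp
    have P: "D (t+1) \<le> D t - 2 * \<eta> t * (g \<omega> s \<bullet> (X t - xstar)) + (\<eta> t)\<^sup>2 * (norm (g \<omega> s))\<^sup>2"
    proof -
      have "X (t+1) = closest_point W (X t - \<eta> t *\<^sub>R g \<omega> s)"
        using upd[OF omega, of t] s t_def by (simp add: X_def)
      then show ?thesis unfolding D_def
        using proj_step[OF W_convex W_closed W_ne xstar, of "X t" "\<eta> t" "g \<omega> s"] by simp
    qed
    have gsq: "(norm (g \<omega> s))\<^sup>2 \<le> Lg\<^sup>2" using g_bd[OF omega s(2)] by (intro power_mono) auto
    have P2: "2 * \<eta> t * (g \<omega> s \<bullet> (X t - xstar)) \<le> D t - D (t+1) + (\<eta> t)\<^sup>2 * Lg\<^sup>2"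
      using P gsq mult_left_mono[OF gsq, of "(\<eta> t)\<^sup>2"] by simp
    have c1: "\<alpha> * real t / 6 * (2 * \<eta> t) = 1" using et alpha_pos tpos by (simp add: field_simps)
    have c2: "\<alpha> * real t / 6 * (\<eta> t)\<^sup>2 = 3 / (2 * \<alpha> * real t)"
      using et alpha_pos tpos by (simp add: field_simps power2_eq_square)
    have ct: "0 \<le> \<alpha> * real t / 6" using alpha_pos tpos by simp
    have P3: "g \<omega> s \<bullet> (X t - xstar) \<le> \<alpha> * real t / 6 * (D t - D (t+1)) + 3 / (2 * \<alpha> * real t) * Lg\<^sup>2"
    proof -
      have "g \<omega> s \<bullet> (X t - xstar) = \<alpha> * real t / 6 * (2 * \<eta> t * (g \<omega> s \<bullet> (X t - xstar)))"
        using c1 by (simp add: mult.assoc[symmetric])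
      also have "\<dots> \<le> \<alpha> * real t / 6 * (D t - D (t+1) + (\<eta> t)\<^sup>2 * Lg\<^sup>2)"
        by (rule mult_left_mono[OF P2 ct])
      also have "\<dots> = \<alpha> * real t / 6 * (D t - D (t+1)) + (\<alpha> * real t / 6 * (\<eta> t)\<^sup>2) * Lg\<^sup>2"
        by (simp only: distrib_left mult.assoc)
      finally show ?thesis using c2 by simp
    qed
    have cross: "g \<omega> s \<bullet> (X s - X t) \<le> Lg * (real \<tau> * (3 / (\<alpha> * real s) * Lg))"
    proof -
      have "g \<omega> s \<bullet> (X s - X t) \<le> norm (g \<omega> s) * norm (X s - X t)" by (rule norm_cauchy_schwarz)
      also have "\<dots> \<le> Lg * (real \<tau> * (3 / (\<alpha> * real s) * Lg))"
        using drift[OF s order_refl] g_bd[OF omega s(2)] t_def Lg0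
        by (intro mult_mono) (auto simp: norm_minus_commute)
      finally show ?thesis .
    qed
    have ug: "g \<omega> s \<bullet> u = g \<omega> s \<bullet> (X t - xstar) + g \<omega> s \<bullet> (X s - X t)"
      unfolding u_def by (simp add: inner_diff_right)
    have q: "3 / (2 * \<alpha> * real t) * Lg\<^sup>2 + Lg * (real \<tau> * (3 / (\<alpha> * real s) * Lg))
        \<le> 3 * Lg\<^sup>2 * (1 + real \<tau>) / \<alpha> * (1 / real s)"
    proof -
      define q where "q = 3 * Lg\<^sup>2 / (\<alpha> * real s)"
      have q0: "0 \<le> q" unfolding q_def using alpha_pos spos by simp
      have "3 / (2 * \<alpha> * real t) * Lg\<^sup>2 \<le> 3 / (2 * \<alpha> * real s) * Lg\<^sup>2"
        using alpha_pos spos t_def by (intro mult_right_mono divide_left_mono) auto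
      also have "\<dots> = q / 2" unfolding q_def by (simp add: field_simps)
      finally have a: "3 / (2 * \<alpha> * real t) * Lg\<^sup>2 \<le> q / 2" .
      have b: "Lg * (real \<tau> * (3 / (\<alpha> * real s) * Lg)) = real \<tau> * q"
        unfolding q_def by (simp add: field_simps power2_eq_square)
      have c: "3 * Lg\<^sup>2 * (1 + real \<tau>) / \<alpha> * (1 / real s) = q + real \<tau> * q"
        unfolding q_def by (simp add: field_simps add_divide_distrib)
      show ?thesis unfolding b c using a q0 by linarith
    qed
    have tt: "\<alpha> * real t / 6 * (D t - D (t+1)) = \<alpha> / 6 * ((real s + real \<tau>) * (D (s+\<tau>) - D (s+\<tau>+1)))"
      unfolding t_def by simp
    show ?thesis using A gdec young P3 cross ug q tt unfolding u_def by linarith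
  qed
  define R where "R s = 3 / (2 * \<alpha>) * (norm (\<epsilon> \<omega> s))\<^sup>2
      - (gradf s \<omega> (X s) - gradfk s \<omega> (X s)) \<bullet> (X s - xstar)" for s
  define c where "c = 3 * Lg\<^sup>2 * (1 + real \<tau>) / \<alpha>"
  define A where "A = (\<Sum>s\<in>{k..<T}. D s)"
  define B where "B = (\<Sum>s\<in>{..<k}. D s)"
  define Tl where "Tl = (\<Sum>s\<in>{k..<T}. (real s + real \<tau>) * (D (s+\<tau>) - D (s+\<tau>+1)))"
  define H where "H = (\<Sum>s\<in>{k..<T}. 1 / real s)"
  have c0: "0 \<le> c" unfolding c_def using alpha_pos by simp
  have S1: "(\<Sum>s\<in>{k..<T}. fk s \<omega> (X s) - fk s \<omega> xstar)
      \<le> (\<Sum>s\<in>{k..<T}. \<alpha> / 6 * ((real s + real \<tau>) * (D (s+\<tau>) - D (s+\<tau>+1)))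
      - \<alpha> / 3 * D s + R s + c * (1 / real s))"
    by (rule sum_mono) (use key in \<open>auto simp: R_def c_def\<close>)
  also have "\<dots> = \<alpha> / 6 * Tl - \<alpha> / 3 * A + (\<Sum>s\<in>{k..<T}. R s) + c * H"
    by (simp add: Tl_def A_def H_def sum.distrib sum_subtractf sum_distrib_left)
  finally have S: "(\<Sum>s\<in>{k..<T}. fk s \<omega> (X s) - fk s \<omega> xstar)
      \<le> \<alpha> / 6 * Tl - \<alpha> / 3 * A + (\<Sum>s\<in>{k..<T}. R s) + c * H" .
  have Tl1: "Tl = (\<Sum>s\<in>{k..<T}. D (s + (\<tau>+1))) + (real k + real \<tau>) * D (k+\<tau>) - (real T + real \<tau>) * D (T+\<tau>)"
    unfolding Tl_def using telesc[where a=k and n=T and E="\<lambda>s. D (s+\<tau>)" and c="real \<tau>"] idx by (simp add: add.assoc)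
  have shift: "(\<Sum>s\<in>{k..<T}. D (s + (\<tau>+1))) \<le> A + (real \<tau> + 1) * G\<^sup>2"
  proof -
    have "(\<Sum>s\<in>{k..<T}. D (s + (\<tau>+1))) = (\<Sum>t\<in>{k + (\<tau>+1)..<T + (\<tau>+1)}. D t)"
      using sum.shift_bounds_nat_ivl[of D k "\<tau>+1" T] by simp
    also have "\<dots> \<le> (\<Sum>t\<in>{k..<T + (\<tau>+1)}. D t)"
      by (rule sum_mono2) (auto simp: D0)
    also have "\<dots> = A + (\<Sum>t\<in>{T..<T + (\<tau>+1)}. D t)"
      unfolding A_def using idx by (intro sum.atLeastLessThan_concat[symmetric]) auto
    also have "(\<Sum>t\<in>{T..<T + (\<tau>+1)}. D t) \<le> of_nat (card {T..<T + (\<tau>+1)}) * G\<^sup>2"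
      by (rule sum_bounded_above) (auto intro: DG)
    finally show ?thesis by (simp add: add.commute)
  qed
  have Tl2: "Tl \<le> A + (real k + 2 * real \<tau> + 1) * G\<^sup>2"
  proof -
    have "(real k + real \<tau>) * D (k+\<tau>) \<le> (real k + real \<tau>) * G\<^sup>2"
      using DG[of "k+\<tau>"] idx by (intro mult_left_mono) auto
    moreover have "0 \<le> (real T + real \<tau>) * D (T+\<tau>)" using D0 by simp
    ultimately have "Tl \<le> A + (real \<tau> + 1) * G\<^sup>2 + (real k + real \<tau>) * G\<^sup>2"
      using Tl1 shift by linarith
    then show ?thesis by (simp add: algebra_simps)
  qed
  have AB: "(\<Sum>s<T. D s) = B + A"
  proof -
    have "(\<Sum>s\<in>{0..<T}. D s) = (\<Sum>s\<in>{0..<k}. D s) + (\<Sum>s\<in>{k..<T}. D s)"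
      using idx by (intro sum.atLeastLessThan_concat[symmetric]) auto
    then show ?thesis by (simp add: A_def B_def atLeast0LessThan)
  qed
  have Bb: "B \<le> real k * G\<^sup>2"
  proof -
    have "B \<le> of_nat (card {..<k}) * G\<^sup>2"
      unfolding B_def by (rule sum_bounded_above) (use idx in \<open>auto intro: DG\<close>)
    then show ?thesis by simp
  qed
  have Hb: "H \<le> ln (real T)"
  proof -
    have "H \<le> ln (real T - 1)" unfolding H_def using harm_ln[of k T] idx by simp
    also have "\<dots> \<le> ln (real T)" using idx by (subst ln_le_cancel_iff) auto
    finally show ?thesis .
  qed
  have e1: "\<alpha> / 6 * Tl \<le> \<alpha> / 6 * A + \<alpha> / 6 * ((real k + 2 * real \<tau> + 1) * G\<^sup>2)"
    using mult_left_mono[OF Tl2, of "\<alpha> / 6"] alpha_pos by (simp add: distrib_left)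
  have e2: "c * H \<le> c * ln (real T)" using mult_left_mono[OF Hb c0] .
  have e3: "\<alpha> / 6 * B \<le> \<alpha> / 6 * (real k * G\<^sup>2)" using mult_left_mono[OF Bb, of "\<alpha> / 6"] alpha_pos by simp
  have e4: "\<alpha> / 6 * ((real k + 2 * real \<tau> + 1) * G\<^sup>2) + \<alpha> / 6 * (real k * G\<^sup>2)
      \<le> \<alpha> * G\<^sup>2 * (3 * real k + 5 * real \<tau> + 3) / 6"
  proof -
    have "\<alpha> * G\<^sup>2 * (3 * real k + 5 * real \<tau> + 3) / 6
       - (\<alpha> / 6 * ((real k + 2 * real \<tau> + 1) * G\<^sup>2) + \<alpha> / 6 * (real k * G\<^sup>2))
       = \<alpha> * G\<^sup>2 * (real k + 3 * real \<tau> + 2) / 6" by (simp add: algebra_simps)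
    moreover have "0 \<le> \<alpha> * G\<^sup>2 * (real k + 3 * real \<tau> + 2) / 6" using alpha_pos by simp
    ultimately show ?thesis by linarith
  qed
  have e5: "- (\<alpha> / 6) * (\<Sum>s<T. D s) = - (\<alpha> / 6 * B) - \<alpha> / 6 * A"
    unfolding AB by (simp add: algebra_simps)
  have e6: "\<alpha> / 3 * A = \<alpha> / 6 * A + \<alpha> / 6 * A" by simp
  have kT: "{k..T-1} = {k..<T}" using idx by auto
  have fin: "(\<Sum>s\<in>{k..<T}. fk s \<omega> (X s) - fk s \<omega> xstar)
     \<le> - (\<alpha> / 6) * (\<Sum>s<T. D s) + \<alpha> * G\<^sup>2 * (3 * real k + 5 * real \<tau> + 3) / 6
       + c * ln (real T) + (\<Sum>s\<in>{k..<T}. R s)"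
    using S e1 e2 e3 e4 e5 e6 by linarith
  then show ?thesis unfolding kT by (simp add: X_def D_def R_def c_def)
qed


end
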